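(* In the setting described in the context, suppose the binary-flux assumption holds. Then the following are equivalent: (i) (class decomposition) for every $k\in K$ there exists $E^k\subset\bar J_n$ such that $k=\bigcup_{j\in E^k}\mathcal O^j$; (ii) there exists an optimal weight family; (iii) the family $\bar w^K=(\bar w^k)_{k\in K}$ defined by $\bar w^{j\to k}:=\frac{b_1}{b_2|\bar J^k_n|}\mathbb 1_{j\in\bar J^k_n}$, where $\bar J^k_n:=\arg\max_{j\in\bar J_n}\Phi^{j\to k}_{\mathrm{disc}}$, is an optimal weight family.
   Context: Let $\mathcal O$ be a finite set of sample types and $K$ a finite set of classes with $|K|\ge2$, each class $k\in K$ identified with a nonempty subset of $\mathcal O$, the classes forming a partition of $\mathcal O$ (so "$o\in k$" means type $o$ has class $k$). Let $\bar J_n$ be a finite nonempty index set (selected $n$-element subsets of input species), and for each $o\in\mathcal O$ and $j\in\bar J_n$ let $\int_o\Phi^j\ge0$ be a given number (the integrated flux of $j$ during presentation of a sample of type $o$). Let $b_1,b_2>0$. Flux discrepancy: $\Phi^{j\to k}_{\mathrm{disc}}:=\frac{1}{|k|}\sum_{o\in k}\int_o\Phi^j-\frac{1}{|K|-1}\sum_{k'\ne k}\frac{1}{|k'|}\sum_{o\in k'}\int_o\Phi^j$. An optimal weight family is $q^K=(q^k)_{k\in K}$ with $q^k=(q^{j\to k})_{j\in\bar J_n}$, $q^{j\to k}\ge0$, $\sum_jq^{j\to k}=\frac{b_1}{b_2}$, such that for all $k\in K$ and $o\in\mathcal O$: $\sum_{j\in\bar J_n}q^{j\to k}\int_o\Phi^j>0$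 if and only if $o\in k$. Binary-flux assumption: there is $p>0$ such that $\int_o\Phi^j\in\{0,p\}$ for all $j\in\bar J_n$, $o\in\mathcal O$; setting $\mathcal O^j:=\{o\in\mathcal O:\int_o\Phi^j=p\}$, all the sets $\mathcal O^j$, $j\in\bar J_n$, have the same cardinality. *)

theory Defs
  imports Complex_Main "HOL-Library.Disjoint_Sets"
begin

text \<open>Integrated fluxes: F s j = integral of Phi^j during presentation of a sample of type o.
  Classes are subsets of the set of sample types; K is the set of classes.\<close>

definition flux_disc :: "('o \<Rightarrow> 'j \<Rightarrow> real) \<Rightarrow> 'o set set \<Rightarrow> 'o set \<Rightarrow> 'j \<Rightarrow> real" where
  "flux_disc F K k j =
     (1 / real (card k)) * (\<Sum>s\<in>k. F s j)
     - (1 / (real (card K) - 1)) * (\<Sum>k'\<in>K - {k}. (1 / real (card k')) * (\<Sum>s\<in>k'. F s j))"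

definition optimal_weight_family ::
  "'o set \<Rightarrow> 'o set set \<Rightarrow> 'j set \<Rightarrow> ('o \<Rightarrow> 'j \<Rightarrow> real) \<Rightarrow> real \<Rightarrow> real
     \<Rightarrow> ('o set \<Rightarrow> 'j \<Rightarrow> real) \<Rightarrow> bool" where
  "optimal_weight_family Ob K J F b1 b2 q \<longleftrightarrow>
     (\<forall>k\<in>K. (\<forall>j\<in>J. q k j \<ge> 0) \<and> (\<Sum>j\<in>J. q k j) = b1 / b2 \<and>
        (\<forall>s\<in>Ob. (\<Sum>j\<in>J. q k j * F s j) > 0 \<longleftrightarrow> s \<in> k))"

definition flux_support :: "'o set \<Rightarrow> ('o \<Rightarrow> 'j \<Rightarrow> real) \<Rightarrow> real \<Rightarrow> 'j \<Rightarrow> 'o set" where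
  "flux_support Ob F p j = {s\<in>Ob. F s j = p}"

definition argmax_disc :: "'j set \<Rightarrow> ('o \<Rightarrow> 'j \<Rightarrow> real) \<Rightarrow> 'o set set \<Rightarrow> 'o set \<Rightarrow> 'j set" where
  "argmax_disc J F K k = {j. is_arg_max (flux_disc F K k) (\<lambda>j. j \<in> J) j}"

definition wbar :: "'j set \<Rightarrow> ('o \<Rightarrow> 'j \<Rightarrow> real) \<Rightarrow> 'o set set \<Rightarrow> real \<Rightarrow> real
     \<Rightarrow> 'o set \<Rightarrow> 'j \<Rightarrow> real" where
  "wbar J F K b1 b2 k j =
     (if j \<in> argmax_disc J F K k then b1 / (b2 * real (card (argmax_disc J F K k))) else 0)"

end

theory Submission
  imports Defs
begin

lemma pos_sum_iff:
  fixes q :: "'j \<Rightarrow> real"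
  assumes "finite J" "\<forall>j\<in>J. q j \<ge> 0" "\<forall>j\<in>J. F s j = 0 \<or> F s j = p" "p > 0"
  shows "(\<Sum>j\<in>J. q j * F s j) > 0 \<longleftrightarrow> (\<exists>j\<in>J. q j > 0 \<and> F s j = p)"
proof -
  have nn: "\<forall>j\<in>J. q j * F s j \<ge> 0"
  proof
    fix j assume j: "j \<in> J"
    have "F s j \<ge> 0" using assms(3,4) j by force
    then show "q j * F s j \<ge> 0" using assms(2) j by simp
  qed
  have t: "\<And>j. j \<in> J \<Longrightarrow> q j * F s j > 0 \<longleftrightarrow> q j > 0 \<and> F s j = p"
    using assms by (smt (verit) mult_pos_pos mult_eq_0_iff)
  show ?thesis
  proof
    assume "(\<Sum>j\<in>J. q j * F s j) > 0"
    then have "\<not> (\<forall>j\<in>J. q j * F s j = 0)" using sum.neutral[of J "\<lambda>j. q j * F s j"] by force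
    then obtain j where j: "j \<in> J" "q j * F s j \<noteq> 0" by blast
    then have "q j * F s j > 0" using nn by (simp add: order_less_le)
    then show "\<exists>j\<in>J. q j > 0 \<and> F s j = p" using t j by blast
  next
    assume "\<exists>j\<in>J. q j > 0 \<and> F s j = p"
    then obtain j where j: "j \<in> J" and pj: "q j * F s j > 0" using t by blast
    show "(\<Sum>j\<in>J. q j * F s j) > 0"
      by (rule sum_pos2[where f="\<lambda>j. q j * F s j", OF assms(1) j pj]) (use nn in blast)
  qed
qed

lemma sum_binary:
  assumes "finite k" "\<forall>s\<in>k. F s j = 0 \<or> F s j = (p::real)"
  shows "(\<Sum>s\<in>k. F s j) = p * real (card {s\<in>k. F s j = p})"
proof -
  have "(\<Sum>s\<in>k. F s j) = (\<Sum>s\<in>{s\<in>k. F s j = p}. F s j)"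
    using assms by (intro sum.mono_neutral_right) auto
  also have "\<dots> = (\<Sum>s\<in>{s\<in>k. F s j = p}. p)" by simp
  finally show ?thesis by simp
qed

theorem theorem13:
  fixes Ob :: "'o set" and K :: "'o set set" and J :: "'j set"
    and F :: "'o \<Rightarrow> 'j \<Rightarrow> real" and b1 b2 p :: real
  assumes finO: "finite Ob"
    and partK: "partition_on Ob K"
    and cardK: "card K \<ge> 2"
    and finJ: "finite J" and neJ: "J \<noteq> {}"
    and Fnn: "\<forall>s\<in>Ob. \<forall>j\<in>J. F s j \<ge> 0"
    and b1: "b1 > 0" and b2: "b2 > 0"
    and p: "p > 0"
    and binary: "\<forall>j\<in>J. \<forall>s\<in>Ob. F s j = 0 \<or> F s j = p"
    and samecard: "\<forall>j\<in>J. \<forall>j'\<in>J. card (flux_support Ob F p j) = card (flux_support Ob F p j')"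
  shows "((\<forall>k\<in>K. \<exists>E. E \<subseteq> J \<and> k = (\<Union>j\<in>E. flux_support Ob F p j))
            \<longleftrightarrow> (\<exists>q. optimal_weight_family Ob K J F b1 b2 q))
       \<and> ((\<exists>q. optimal_weight_family Ob K J F b1 b2 q)
            \<longleftrightarrow> optimal_weight_family Ob K J F b1 b2 (wbar J F K b1 b2))"
proof -
  define Os where "Os = flux_support Ob F p"
  have Odef: "\<And>j. Os j = {s\<in>Ob. F s j = p}" unfolding Os_def flux_support_def by simp
  have Ksub: "\<And>k. k \<in> K \<Longrightarrow> k \<subseteq> Ob" using partition_onD1[OF partK] by blast
  have Kne: "\<And>k. k \<in> K \<Longrightarrow> k \<noteq> {}" using partition_onD3[OF partK] by blast
  have Kdisj: "\<And>k k'. k \<in> K \<Longrightarrow> k' \<in> K \<Longrightarrow> k \<noteq> k' \<Longrightarrow> k \<inter> k' = {}"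
    using partition_onD2[OF partK] unfolding disjoint_def by blast
  have finK: "finite K" using cardK card.infinite by fastforce
  have finOj: "\<And>j. finite (Os j)" using finO Odef by simp
  let ?P1 = "\<forall>k\<in>K. \<exists>E. E \<subseteq> J \<and> k = (\<Union>j\<in>E. Os j)"
  let ?P2 = "\<exists>q. optimal_weight_family Ob K J F b1 b2 q"
  let ?P3 = "optimal_weight_family Ob K J F b1 b2 (wbar J F K b1 b2)"
  have sumk: "\<And>k j. k \<in> K \<Longrightarrow> j \<in> J \<Longrightarrow> (\<Sum>s\<in>k. F s j) = p * real (card (Os j \<inter> k))"
  proof -
    fix k j assume k: "k \<in> K" and j: "j \<in> J"
    have "{s\<in>k. F s j = p} = Os j \<inter> k" using Ksub[OF k] Odef by auto
    moreover have "(\<Sum>s\<in>k. F s j) = p * real (card {s\<in>k. F s j = p})"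
      using Ksub[OF k] finO binary j by (intro sum_binary) (auto intro: finite_subset)
    ultimately show "(\<Sum>s\<in>k. F s j) = p * real (card (Os j \<inter> k))" by simp
  qed
  have P21: "?P2 \<Longrightarrow> ?P1"
  proof -
    assume ?P2
    then obtain q where q: "optimal_weight_family Ob K J F b1 b2 q" by blast
    show ?P1
    proof
      fix k assume k: "k \<in> K"
      have qq: "(\<forall>j\<in>J. q k j \<ge> 0) \<and> (\<forall>s\<in>Ob. (\<Sum>j\<in>J. q k j * F s j) > 0 \<longleftrightarrow> s \<in> k)"
        using q k unfolding optimal_weight_family_def by blast
      then have qn: "\<forall>j\<in>J. q k j \<ge> 0" and qp: "\<forall>s\<in>Ob. (\<Sum>j\<in>J. q k j * F s j) > 0 \<longleftrightarrow> s \<in> k"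
        by blast+
      have key: "s \<in> k \<longleftrightarrow> (\<exists>j\<in>J. q k j > 0 \<and> F s j = p)" if s: "s \<in> Ob" for s
      proof -
        have bs: "\<forall>j\<in>J. F s j = 0 \<or> F s j = p" using binary s by blast
        have "s \<in> k \<longleftrightarrow> (\<Sum>j\<in>J. q k j * F s j) > 0" using qp s by blast
        also have "\<dots> \<longleftrightarrow> (\<exists>j\<in>J. q k j > 0 \<and> F s j = p)" by (rule pos_sum_iff[where q="q k" and F=F and s=s, OF finJ qn bs p])
        finally show ?thesis .
      qed
      have kE: "k = (\<Union>j\<in>{j\<in>J. q k j > 0}. Os j)"
      proof (rule set_eqI)
        fix s
        show "s \<in> k \<longleftrightarrow> s \<in> (\<Union>j\<in>{j\<in>J. q k j > 0}. Os j)"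
        proof (cases "s \<in> Ob")
          case True
          then show ?thesis using key[OF True] Odef by auto
        next
          case False
          then show ?thesis using Ksub[OF k] Odef by auto
        qed
      qed
      show "\<exists>E. E \<subseteq> J \<and> k = (\<Union>j\<in>E. Os j)"
      proof (intro exI conjI)
        show "{j\<in>J. q k j > 0} \<subseteq> J" by blast
        show "k = (\<Union>j\<in>{j\<in>J. q k j > 0}. Os j)" by (rule kE)
      qed
    qed
  qed
  have P13: "?P1 \<Longrightarrow> ?P3"
  proof -
    assume P1: ?P1
    show ?P3 unfolding optimal_weight_family_def
    proof
      fix k assume k: "k \<in> K"
      obtain E where E: "E \<subseteq> J" "k = (\<Union>j\<in>E. Os j)" using P1 k by blast
      obtain j0 where j0: "j0 \<in> E" "Os j0 \<noteq> {}" using E Kne[OF k] by blast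
      define c where "c = card (Os j0)"
      have cpos: "c > 0" unfolding c_def using j0 finOj card_gt_0_iff by blast
      have cardO: "\<And>j. j \<in> J \<Longrightarrow> card (Os j) = c"
        unfolding c_def Os_def using samecard j0 E by blast
      have fink: "finite k" using Ksub[OF k] finO finite_subset by blast
      have cardk: "card k > 0" using fink Kne[OF k] by (simp add: card_gt_0_iff)
      define M where "M = p * real c / real (card k)"
      have cK: "real (card K) - 1 > 0" using cardK by simp
      have disc_in: "\<And>j. j \<in> J \<Longrightarrow> Os j \<subseteq> k \<Longrightarrow> flux_disc F K k j = M"
      proof -
        fix j assume j: "j \<in> J" and sub: "Os j \<subseteq> k"
        have z: "\<And>k'. k' \<in> K - {k} \<Longrightarrow> (1 / real (card k')) * (\<Sum>s\<in>k'. F s j) = 0"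
        proof -
          fix k' assume k': "k' \<in> K - {k}"
          have "Os j \<inter> k' = {}" using Kdisj[OF k] k' sub by blast
          then show "(1 / real (card k')) * (\<Sum>s\<in>k'. F s j) = 0" using sumk[of k' j] k' j by simp
        qed
        have "(\<Sum>k'\<in>K - {k}. (1 / real (card k')) * (\<Sum>s\<in>k'. F s j)) = 0"
          by (rule sum.neutral) (use z in blast)
        moreover have "Os j \<inter> k = Os j" using sub by blast
        ultimately show "flux_disc F K k j = M"
          unfolding flux_disc_def M_def using sumk[OF k j] cardO[OF j] by simp
      qed
      have disc_out: "\<And>j. j \<in> J \<Longrightarrow> \<not> Os j \<subseteq> k \<Longrightarrow> flux_disc F K k j < M"
      proof -
        fix j assume j: "j \<in> J" and nsub: "\<not> Os j \<subseteq> k"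
        have ps: "Os j \<inter> k \<subset> Os j" using nsub by blast
        have lt: "card (Os j \<inter> k) < c" using psubset_card_mono[OF finOj[of j] ps] cardO[OF j] by simp
        have nn: "(\<Sum>k'\<in>K - {k}. (1 / real (card k')) * (\<Sum>s\<in>k'. F s j)) \<ge> 0"
          using sumk j p by (intro sum_nonneg) simp
        have "(1 / real (card k)) * (\<Sum>s\<in>k. F s j) = p * real (card (Os j \<inter> k)) / real (card k)"
          using sumk[OF k j] by simp
        also have "\<dots> < M" unfolding M_def using lt cardk p
          by (intro divide_strict_right_mono mult_strict_left_mono) auto
        finally show "flux_disc F K k j < M"
          unfolding flux_disc_def using nn cK by (smt (verit) divide_nonneg_pos mult_nonneg_nonneg)
      qed
      define A where "A = argmax_disc J F K k"
      have A: "A = {j\<in>J. Os j \<subseteq> k}"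
      proof -
        have j0J: "j0 \<in> J" "Os j0 \<subseteq> k" using j0 E by auto
        show ?thesis unfolding A_def argmax_disc_def is_arg_max_def
          using disc_in disc_out j0J by (smt (verit) Collect_cong)
      qed
      have finA: "finite A" using A finJ by simp
      have j0A: "j0 \<in> A" using A j0 E by auto
      have cardA: "card A > 0" using finA j0A card_gt_0_iff by blast
      have wb: "\<And>j. wbar J F K b1 b2 k j = (if j \<in> A then b1 / (b2 * real (card A)) else 0)"
        unfolding wbar_def A_def by simp
      have wpos: "b1 / (b2 * real (card A)) > 0" using b1 b2 cardA by simp
      have wnn: "\<forall>j\<in>J. wbar J F K b1 b2 k j \<ge> 0" using wb wpos by simp
      have AJ: "A \<subseteq> J" using A by blast
      have "(\<Sum>j\<in>J. wbar J F K b1 b2 k j) = (\<Sum>j\<in>A. b1 / (b2 * real (card A)))"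
        unfolding wb using AJ finJ by (simp add: sum.If_cases Int_absorb1)
      also have "\<dots> = b1 / b2" using cardA by simp
      finally have sumw: "(\<Sum>j\<in>J. wbar J F K b1 b2 k j) = b1 / b2" .
      have posw: "\<forall>s\<in>Ob. (\<Sum>j\<in>J. wbar J F K b1 b2 k j * F s j) > 0 \<longleftrightarrow> s \<in> k"
      proof
        fix s assume s: "s \<in> Ob"
        have "(\<Sum>j\<in>J. wbar J F K b1 b2 k j * F s j) > 0 \<longleftrightarrow>
              (\<exists>j\<in>J. wbar J F K b1 b2 k j > 0 \<and> F s j = p)"
          using pos_sum_iff[where q="wbar J F K b1 b2 k" and F=F and s=s, OF finJ wnn _ p] binary s by blast
        also have "\<dots> \<longleftrightarrow> (\<exists>j\<in>A. s \<in> Os j)" using wb wpos AJ s Odef by auto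
        also have "\<dots> \<longleftrightarrow> s \<in> k" using A E by blast
        finally show "(\<Sum>j\<in>J. wbar J F K b1 b2 k j * F s j) > 0 \<longleftrightarrow> s \<in> k" .
      qed
      show "(\<forall>j\<in>J. 0 \<le> wbar J F K b1 b2 k j) \<and> (\<Sum>j\<in>J. wbar J F K b1 b2 k j) = b1 / b2 \<and>
         (\<forall>s\<in>Ob. (0 < (\<Sum>j\<in>J. wbar J F K b1 b2 k j * F s j)) = (s \<in> k))"
        using wnn sumw posw by blast
    qed
  qed
  have "?P1 \<longleftrightarrow> ?P2" using P21 P13 by blast
  moreover have "?P2 \<longleftrightarrow> ?P3" using P21 P13 by blast
  ultimately show ?thesis unfolding Os_def by blast
qed

end
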